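(* Let $\Lambda:[0,1]\to[0,\infty)$ be non-increasing, continuously differentiable on $[0,1]$, with second derivative $\Lambda''$ existing on $[0,1]$ and bounded in absolute value there, and set $Z=\int_0^1\Lambda(s)\,ds$ and $\Lambda_{\max}=\Lambda(0)$. For $n\ge1$ let $U_1,\dots,U_n$ be i.i.d. $\mathcal{U}(0,1)$ with order statistics $U_{(1)}\le\dots\le U_{(n)}$, and set $U_{(0)}\equiv 0$, $U_{(n+1)}\equiv 1$. Define \[ \hat Z_{QIS}=\frac12\sum_{i=1}^{n+1}\bigl(U_{(i)}-U_{(i-1)}\bigr)\bigl\{\Lambda(U_{(i-1)})+\Lambda(U_{(i)})\bigr\}. \] Then: (1) there is a constant $M$ (not depending on $n$) such that $\mathbb{E}\bigl[(Z-\hat Z_{QIS})^2\bigr]\le M/n^4$ for all $n\ge1$; (2) almost surely, \[ \sum_{i=1}^{n}\bigl(U_{(i)}-U_{(i-1)}\bigr)\Lambda(U_{(i)}) \;\le\; \hat Z_{QIS}\;\le\; \sum_{i=1}^{n}\bigl(U_{(i+1)}-U_{(i)}\bigr)\Lambda(U_{(i)}) + U_{(1)}\Lambda_{\max}. \]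
   Context: In the intended application, $Z=\int L\,dP$ is the evidence and $\Lambda$ is the pseudo-inverse of the survival function $Z(y)=P\{L({\bf X})>y\}$ of the likelihood ordinate, $\Lambda(s)=\sup\{y: Z(y)>s\}$, so that $Z=\int_0^1\Lambda(s)ds$; $\Lambda(0)$ corresponds to the maximum likelihood value $\Lambda_{\max}$. $\hat Z_{QIS}$ is the (trapezoidal) Quantile Importance Sampling estimator. *)

theory Defs
  imports "HOL-Probability.Probability"
begin

text \<open>Joint law of n i.i.d. U(0,1) variables U_1..U_n (indexed 0..n-1).\<close>
definition unif_sample :: "nat \<Rightarrow> (nat \<Rightarrow> real) measure" where
  "unif_sample n = PiM {..<n} (\<lambda>_. uniform_measure lborel {0..1::real})"

definition ordstat :: "nat \<Rightarrow> (nat \<Rightarrow> real) \<Rightarrow> nat \<Rightarrow> real" where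
  "ordstat n u i = (if i = 0 then 0 else if i = n + 1 then 1
                    else sort (map u [0..<n]) ! (i - 1))"

definition Z_QIS :: "(real \<Rightarrow> real) \<Rightarrow> nat \<Rightarrow> (nat \<Rightarrow> real) \<Rightarrow> real" where
  "Z_QIS \<Lambda> n u = 1/2 * (\<Sum>i=1..n+1. (ordstat n u i - ordstat n u (i - 1)) *
                         (\<Lambda> (ordstat n u (i - 1)) + \<Lambda> (ordstat n u i)))"

end

theory Submission
  imports Defs "HOL-Real_Asymp.Real_Asymp"
begin

abbreviation U01 :: "real measure" where "U01 \<equiv> uniform_measure lborel {0..1::real}"

lemma prob_U01: "prob_space U01"
  by (rule prob_space_uniform_measure) auto

lemma prob_unif: "prob_space (unif_sample n)"
  unfolding unif_sample_def by (rule prob_space_PiM) (rule prob_U01)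

interpretation U: product_sigma_finite "\<lambda>_::nat. U01"
  unfolding product_sigma_finite_def
  using prob_U01 prob_space_imp_sigma_finite by blast

lemma emeasure_U01: "A \<in> sets borel \<Longrightarrow> emeasure U01 A = emeasure lborel (A \<inter> {0..1})"
  by (subst emeasure_uniform_measure) (auto simp: Int_commute divide_ennreal_def)

lemma meas_box:
  assumes "\<And>i. i < n \<Longrightarrow> A i \<in> sets borel"
  shows "measure (unif_sample n) (PiE {..<n} A) = (\<Prod>i<n. measure lborel (A i \<inter> {0..1}))"
proof -
  have "emeasure (unif_sample n) (PiE {..<n} A) = (\<Prod>i<n. emeasure U01 (A i))"
    unfolding unif_sample_def by (rule U.emeasure_PiM) (use assms in auto)
  also have "\<dots> = (\<Prod>i<n. ennreal (measure lborel (A i \<inter> {0..1})))"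
    apply (rule prod.cong, simp)
    proof -
    fix i assume i: "i \<in> {..<n}"
    have "emeasure lborel (A i \<inter> {0..1}) \<le> emeasure lborel {0..1::real}"
      by (rule emeasure_mono) auto
    hence "emeasure lborel (A i \<inter> {0..1}) \<noteq> \<top>" by (auto simp: top_unique)
    thus "emeasure U01 (A i) = ennreal (measure lborel (A i \<inter> {0..1}))"
      using assms i by (subst emeasure_U01) (auto intro!: emeasure_eq_ennreal_measure)
  qed
  also have "\<dots> = ennreal (\<Prod>i<n. measure lborel (A i \<inter> {0..1}))"
    by (simp add: prod_ennreal)
  finally show ?thesis
    by (simp add: Sigma_Algebra.measure_def prod_nonneg)
qed

locale trap =
  fixes \<Lambda> \<Lambda>' \<Lambda>'' :: "real \<Rightarrow> real" and B :: real
  assumes d1: "\<forall>s\<in>{0..1}. (\<Lambda> has_real_derivative \<Lambda>' s) (at s within {0..1})"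
    and d2: "\<forall>s\<in>{0..1}. (\<Lambda>' has_real_derivative \<Lambda>'' s) (at s within {0..1})"
    and d2_bdd: "\<forall>s\<in>{0..1}. \<bar>\<Lambda>'' s\<bar> \<le> B"
begin

lemma cont: "continuous_on {0..1} \<Lambda>"
  using d1 by (intro DERIV_continuous_on) auto

lemma lip: assumes "x \<in> {0..1}" "y \<in> {0..1}" shows "\<bar>\<Lambda>' x - \<Lambda>' y\<bar> \<le> B * \<bar>x - y\<bar>"
  using field_differentiable_bound[of "{0..1}" \<Lambda>' \<Lambda>'' B x y] d2 d2_bdd assms by auto

lemma B_nonneg: "0 \<le> B" using d2_bdd abs_ge_zero[of "\<Lambda>'' 0"] by force

lemma step1:
  assumes "0 \<le> a" "a \<le> t" "t \<le> 1"
  shows "\<bar>\<Lambda> t - \<Lambda> a - (t - a) * \<Lambda>' t\<bar> \<le> B * (t - a)^2"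
proof -
  have "norm ((\<lambda>s. \<Lambda> s - s * \<Lambda>' t) t - (\<lambda>s. \<Lambda> s - s * \<Lambda>' t) a) \<le> (B * (t - a)) * norm (t - a)"
  proof (rule field_differentiable_bound[of "{a..t}" _ "\<lambda>s. \<Lambda>' s - \<Lambda>' t"])
    fix z assume z: "z \<in> {a..t}"
    hence "z \<in> {0..1}" using assms by auto
    hence z01: "z \<in> {0..1}" by simp
    have sub: "{a..t} \<subseteq> {0..1}" using assms by auto
    have "(\<Lambda> has_real_derivative \<Lambda>' z) (at z within {a..t})"
      using d1 z01 sub by (blast intro: DERIV_subset)
    moreover have "((\<lambda>s. s * \<Lambda>' t) has_real_derivative \<Lambda>' t) (at z within {a..t})"
      using DERIV_cmult_right[OF DERIV_ident] by simp
    ultimately show "((\<lambda>s. \<Lambda> s - s * \<Lambda>' t) has_real_derivative \<Lambda>' z - \<Lambda>' t) (at z within {a..t})"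
      by (rule DERIV_diff)
    have t01: "t \<in> {0..1}" using assms by simp
    have "\<bar>\<Lambda>' z - \<Lambda>' t\<bar> \<le> B * \<bar>z - t\<bar>" using lip[OF z01 t01] .
    also have "\<dots> \<le> B * (t - a)"
      using z B_nonneg by (intro mult_left_mono) auto
    finally show "norm (\<Lambda>' z - \<Lambda>' t) \<le> B * (t - a)" by simp
  next
    show "convex {a..t}" by simp
  qed (use assms in simp_all)
  moreover have e1: "(\<lambda>s. \<Lambda> s - s * \<Lambda>' t) t - (\<lambda>s. \<Lambda> s - s * \<Lambda>' t) a = \<Lambda> t - \<Lambda> a - (t - a) * \<Lambda>' t"
    by (simp add: algebra_simps)
  moreover have e2: "(B * (t - a)) * norm (t - a) = B * (t - a)^2" using assms by (simp add: power2_eq_square)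
  ultimately show ?thesis by (simp only: real_norm_def)
qed


lemma local_err:
  assumes "0 \<le> a" "a \<le> b" "b \<le> 1"
  shows "\<bar>integral {a..b} \<Lambda> - (b - a) * (\<Lambda> a + \<Lambda> b) / 2\<bar> \<le> B / 2 * (b - a)^3"
proof -
  define F where "F t = integral {a..t} \<Lambda> - (t - a) * (\<Lambda> a + \<Lambda> t) / 2" for t
  have ca: "continuous_on {a..b} \<Lambda>" using cont assms by (auto intro: continuous_on_subset)
  have "norm (F b - F a) \<le> (B / 2 * (b - a)^2) * norm (b - a)"
  proof (rule field_differentiable_bound[of "{a..b}" _ "\<lambda>t. (\<Lambda> t - \<Lambda> a - (t - a) * \<Lambda>' t) / 2"])
    fix z assume z: "z \<in> {a..b}"
    hence "z \<in> {0..1}" using assms by auto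
    hence z01: "z \<in> {0..1}" by simp
    have sub: "{a..b} \<subseteq> {0..1}" using assms by auto
    have D: "(\<Lambda> has_real_derivative \<Lambda>' z) (at z within {a..b})"
      using d1 z01 sub by (blast intro: DERIV_subset)
    have I: "((\<lambda>t. integral {a..t} \<Lambda>) has_real_derivative \<Lambda> z) (at z within {a..b})"
      using integral_has_vector_derivative[OF ca z] has_real_derivative_iff_has_vector_derivative by blast
    have L1: "((\<lambda>t. t - a) has_real_derivative 1) (at z within {a..b})"
      by (rule derivative_eq_intros refl)+ simp
    have L2: "((\<lambda>t. \<Lambda> a + \<Lambda> t) has_real_derivative \<Lambda>' z) (at z within {a..b})"
      using DERIV_add[OF DERIV_const D] by simp
    have L: "((\<lambda>t. (t - a) * (\<Lambda> a + \<Lambda> t) / 2) has_real_derivative ((1 * (\<Lambda> a + \<Lambda> z) + (z - a) * \<Lambda>' z) / 2)) (at z within {a..b})"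
      using DERIV_cdivide[OF DERIV_mult'[OF L1 L2], of 2] by (simp add: add.commute)
    have "(F has_real_derivative (\<Lambda> z - ((1 * (\<Lambda> a + \<Lambda> z) + (z - a) * \<Lambda>' z) / 2))) (at z within {a..b})"
      unfolding F_def by (rule DERIV_diff[OF I L])
    thus "(F has_field_derivative (\<Lambda> z - \<Lambda> a - (z - a) * \<Lambda>' z) / 2) (at z within {a..b})"
      by (rule DERIV_cong) (simp add: field_simps)
    have "\<bar>\<Lambda> z - \<Lambda> a - (z - a) * \<Lambda>' z\<bar> \<le> B * (z - a)^2"
      using z assms by (intro step1) auto
    also have "\<dots> \<le> B * (b - a)^2" using z B_nonneg by (intro mult_left_mono power_mono) auto
    finally show "norm ((\<Lambda> z - \<Lambda> a - (z - a) * \<Lambda>' z) / 2) \<le> B / 2 * (b - a)^2" by simp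
  next
    show "convex {a..b}" by simp
  qed (use assms in simp_all)
  moreover have "F a = 0" by (simp add: F_def)
  moreover have "(B / 2 * (b - a)^2) * norm (b - a) = B / 2 * (b - a)^3" using assms
    by (simp add: power3_eq_cube power2_eq_square)
  ultimately have "\<bar>F b\<bar> \<le> B / 2 * (b - a)^3" by (simp only: real_norm_def diff_zero)
  thus ?thesis by (simp only: F_def)
qed


lemma global_err:
  fixes y :: "nat \<Rightarrow> real"
  assumes y0: "y 0 = 0" and ym: "y m = 1" and mono: "\<And>i j. i \<le> j \<Longrightarrow> j \<le> m \<Longrightarrow> y i \<le> y j"
  shows "\<bar>integral {0..1} \<Lambda> - 1/2 * (\<Sum>i=1..m. (y i - y (i-1)) * (\<Lambda> (y (i-1)) + \<Lambda> (y i)))\<bar>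
           \<le> B / 2 * (\<Sum>i=1..m. (y i - y (i-1))^3)"
proof -
  have rng: "0 \<le> y i \<and> y i \<le> 1" if "i \<le> m" for i
    using mono[of 0 i] mono[of i m] that y0 ym by auto
  have split: "integral {0..y k} \<Lambda> = (\<Sum>i=1..k. integral {y (i-1)..y i} \<Lambda>)" if "k \<le> m" for k
    using that
  proof (induction k)
    case 0 thus ?case using y0 by simp
  next
    case (Suc k)
    have a: "0 \<le> y k" "y k \<le> y (Suc k)" "y (Suc k) \<le> 1"
      using rng[of k] rng[of "Suc k"] mono[of k "Suc k"] Suc.prems by auto
    have "\<Lambda> integrable_on {0..y (Suc k)}"
      using a by (intro integrable_continuous_real continuous_on_subset[OF cont]) auto
    hence "integral {0..y k} \<Lambda> + integral {y k..y (Suc k)} \<Lambda> = integral {0..y (Suc k)} \<Lambda>"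
      using a by (intro Henstock_Kurzweil_Integration.integral_combine) auto
    moreover have "integral {0..y k} \<Lambda> = (\<Sum>i=1..k. integral {y (i-1)..y i} \<Lambda>)"
      using Suc.prems by (intro Suc.IH) simp
    moreover have "(\<Sum>i=1..Suc k. integral {y (i-1)..y i} \<Lambda>)
        = (\<Sum>i=1..k. integral {y (i-1)..y i} \<Lambda>) + integral {y k..y (Suc k)} \<Lambda>"
      by (simp add: sum.cl_ivl_Suc)
    ultimately show ?case by linarith
  qed
  have eqn: "integral {0..1} \<Lambda> - 1/2 * (\<Sum>i=1..m. (y i - y (i-1)) * (\<Lambda> (y (i-1)) + \<Lambda> (y i)))
     = (\<Sum>i=1..m. integral {y (i-1)..y i} \<Lambda> - (y i - y (i-1)) * (\<Lambda> (y (i-1)) + \<Lambda> (y i)) / 2)"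
  proof -
    have e1: "integral {0..1} \<Lambda> = (\<Sum>i=1..m. integral {y (i-1)..y i} \<Lambda>)"
      using split[of m] ym by simp
    have e2: "1/2 * (\<Sum>i=1..m. (y i - y (i-1)) * (\<Lambda> (y (i-1)) + \<Lambda> (y i)))
        = (\<Sum>i=1..m. (y i - y (i-1)) * (\<Lambda> (y (i-1)) + \<Lambda> (y i)) / 2)"
      by (simp only: sum_divide_distrib[symmetric])
    show ?thesis unfolding e1 e2 by (rule sum_subtractf[symmetric])
  qed
  have "\<bar>(\<Sum>i=1..m. integral {y (i-1)..y i} \<Lambda> - (y i - y (i-1)) * (\<Lambda> (y (i-1)) + \<Lambda> (y i)) / 2)\<bar> \<le> (\<Sum>i=1..m. \<bar>integral {y (i-1)..y i} \<Lambda> - (y i - y (i-1)) * (\<Lambda> (y (i-1)) + \<Lambda> (y i)) / 2\<bar>)"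
    by (rule sum_abs)
  also have "\<dots> \<le> (\<Sum>i=1..m. B / 2 * (y i - y (i-1))^3)"
  proof (rule sum_mono)
    fix i assume "i \<in> {1..m}"
    hence "0 \<le> y (i-1)" "y (i-1) \<le> y i" "y i \<le> 1" using rng[of "i-1"] rng[of i] mono[of "i-1" i] by auto
    thus "\<bar>integral {y (i-1)..y i} \<Lambda> - (y i - y (i-1)) * (\<Lambda> (y (i-1)) + \<Lambda> (y i)) / 2\<bar> \<le> B / 2 * (y i - y (i-1))^3"
      by (rule local_err)
  qed
  also have "\<dots> = B / 2 * (\<Sum>i=1..m. (y i - y (i-1))^3)" by (simp add: sum_distrib_left)
  finally show ?thesis unfolding eqn .
qed

end

definition Rsp :: "nat \<Rightarrow> (nat \<Rightarrow> real) \<Rightarrow> nat \<Rightarrow> real" where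
  "Rsp n u j = Min (insert 1 {u k | k. k < n \<and> u j < u k}) - u j"

context
  fixes n :: nat and u :: "nat \<Rightarrow> real"
  assumes U: "\<forall>i<n. u i \<in> {0..1}"
begin

private abbreviation "xs \<equiv> sort (map u [0..<n])"

lemma xs_len: "length xs = n" by simp
lemma xs_set: "set xs = u ` {..<n}" by auto
lemma xs_sorted: "sorted xs" by simp

lemma ord_mid: "1 \<le> i \<Longrightarrow> i \<le> n \<Longrightarrow> ordstat n u i = xs ! (i - 1)"
  by (simp add: ordstat_def)

lemma ord_in: assumes "1 \<le> i" "i \<le> n" shows "\<exists>j<n. u j = ordstat n u i"
proof -
  have "xs ! (i - 1) \<in> set xs" using assms by (intro nth_mem) simp
  thus ?thesis using ord_mid[OF assms] xs_set by force
qed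

lemma ord_range: assumes "i \<le> n + 1" shows "0 \<le> ordstat n u i \<and> ordstat n u i \<le> 1"
proof (cases "i = 0 \<or> i = n + 1")
  case True thus ?thesis by (auto simp: ordstat_def)
next
  case False
  then obtain j where "j < n" "u j = ordstat n u i" using ord_in[of i] assms by force
  thus ?thesis using U by force
qed

lemma xs_elem: "k < n \<Longrightarrow> \<exists>m<n. u k = xs ! m"
proof -
  assume "k < n"
  hence "u k \<in> set xs" using xs_set by auto
  thus ?thesis by (metis in_set_conv_nth xs_len)
qed

lemma ord_mono: assumes "i \<le> j" "j \<le> n + 1" shows "ordstat n u i \<le> ordstat n u j"
proof -
  consider "i = 0" | "j = n + 1" | "1 \<le> i" "j \<le> n" using assms by linarith
  thus ?thesis
  proof cases
    case 1 thus ?thesis using ord_range[of j] assms by (simp add: ordstat_def)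
  next
    case 2 thus ?thesis using ord_range[of i] assms by (simp add: ordstat_def)
  next
    case 3
    thus ?thesis using assms by (simp add: ord_mid sorted_nth_mono)
  qed
qed

lemma ord_next: assumes "1 \<le> i" "i \<le> n" "k < n" "ordstat n u i < u k"
  shows "ordstat n u (i + 1) \<le> u k"
proof -
  obtain m where m: "m < n" "u k = xs ! m" using xs_elem assms by blast
  have "\<not> m \<le> i - 1"
  proof
    assume "m \<le> i - 1"
    hence "xs ! m \<le> xs ! (i - 1)" using assms by (intro sorted_nth_mono) auto
    thus False using assms m ord_mid by simp
  qed
  hence "i < n" "xs ! i \<le> xs ! m" using m assms by (auto intro: sorted_nth_mono)
  thus ?thesis using m assms by (simp add: ord_mid)
qed

lemma ord_first: assumes "k < n" shows "ordstat n u 1 \<le> u k"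
proof -
  obtain m where m: "m < n" "u k = xs ! m" using xs_elem assms by blast
  thus ?thesis using assms by (simp add: ord_mid sorted_nth_mono)
qed


lemma Rsp_fin: "finite {u k | k. k < n \<and> u j < u k}"
  by (rule finite_subset[of _ "u ` {..<n}"]) auto

lemma Rsp_nonneg: assumes "j < n" shows "0 \<le> Rsp n u j"
proof -
  have "u j \<le> Min (insert 1 {u k | k. k < n \<and> u j < u k})"
    using U assms Rsp_fin[of j] by (subst Min_ge_iff) auto
  thus ?thesis by (simp add: Rsp_def)
qed

lemma Rsp_le: "Rsp n u j \<le> 1 - u j"
  unfolding Rsp_def using Rsp_fin by (simp add: Min_le_iff)

lemma Rsp_gap: "k < n \<Longrightarrow> u j < u k \<Longrightarrow> Rsp n u j \<le> u k - u j"
  unfolding Rsp_def using Rsp_fin by (auto simp: Min_le_iff)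

lemma Rsp_lower: assumes "c \<le> 1" "\<And>k. k < n \<Longrightarrow> u j < u k \<Longrightarrow> c \<le> u k" shows "c - u j \<le> Rsp n u j"
proof -
  have "c \<le> Min (insert 1 {u k | k. k < n \<and> u j < u k})"
    using assms Rsp_fin[of j] by (subst Min_ge_iff) auto
  thus ?thesis by (simp add: Rsp_def)
qed

lemma spacing_R:
  "(\<Sum>i=1..n. (ordstat n u (i+1) - ordstat n u i)^5) \<le> (\<Sum>j<n. Rsp n u j ^ 5)"
proof -
  let ?y = "ordstat n u"
  define P where "P = {i\<in>{1..n}. ?y i < ?y (i+1)}"
  define J where "J i = (SOME j. j < n \<and> u j = ?y i)" for i
  have J: "J i < n \<and> u (J i) = ?y i" if "i \<in> {1..n}" for i
  proof -
    have "\<exists>j. j < n \<and> u j = ?y i" using ord_in[of i] that by simp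
    thus ?thesis unfolding J_def by (rule someI_ex)
  qed
  have mono1: "?y i \<le> ?y (i+1)" if "i \<in> {1..n}" for i
    using that by (intro ord_mono) simp_all
  have "(\<Sum>i=1..n. (?y (i+1) - ?y i)^5) = (\<Sum>i\<in>P. (?y (i+1) - ?y i)^5)"
  proof (rule sum.mono_neutral_right)
    show "\<forall>i\<in>{1..n} - P. (?y (i+1) - ?y i)^5 = 0"
    proof
      fix i assume a: "i \<in> {1..n} - P"
      hence "\<not> ?y i < ?y (i+1)" unfolding P_def by blast
      moreover have "i \<in> {1..n}" using a by blast
      ultimately have "?y (i+1) = ?y i" using mono1[of i] by linarith
      thus "(?y (i+1) - ?y i)^5 = 0" by simp
    qed
    show "P \<subseteq> {1..n}" unfolding P_def by blast
  qed simp
  also have "\<dots> \<le> (\<Sum>i\<in>P. Rsp n u (J i) ^ 5)"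
  proof (rule sum_mono)
    fix i assume iP: "i \<in> P"
    hence i1: "i \<in> {1..n}" by (simp add: P_def)
    have Ji: "J i < n" "u (J i) = ?y i" using J[OF i1] by auto
    have "?y (i+1) - u (J i) \<le> Rsp n u (J i)"
    proof (rule Rsp_lower)
      have "i + 1 \<le> n + 1" using i1 by simp
      from ord_range[OF this] show "?y (i+1) \<le> 1" by linarith
      fix k assume k: "k < n" "u (J i) < u k"
      have "1 \<le> i" "i \<le> n" using i1 by auto
      from ord_next[OF this k(1)] k(2) Ji(2) show "?y (i+1) \<le> u k" by simp
    qed
    hence "?y (i+1) - ?y i \<le> Rsp n u (J i)" using Ji(2) by simp
    moreover have "0 \<le> ?y (i+1) - ?y i" using mono1[OF i1] by simp
    ultimately show "(?y (i+1) - ?y i)^5 \<le> Rsp n u (J i) ^ 5"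
      by (rule power_mono)
  qed
  also have "\<dots> = (\<Sum>j\<in>J ` P. Rsp n u j ^ 5)"
  proof -
    have "inj_on J P"
    proof
      fix i i' assume iP: "i \<in> P" and iP': "i' \<in> P" and eq: "J i = J i'"
      have i1: "i \<in> {1..n}" and i1': "i' \<in> {1..n}" using iP iP' by (auto simp: P_def)
      have v: "?y i = ?y i'" using J[OF i1] J[OF i1'] eq by simp
      have lt: "?y i < ?y (i+1)" "?y i' < ?y (i'+1)" using iP iP' by (auto simp: P_def)
      show "i = i'"
      proof (rule ccontr)
        assume "i \<noteq> i'"
        then consider "i + 1 \<le> i'" | "i' + 1 \<le> i" by linarith
        thus False
        proof cases
          case 1
          have "?y (i+1) \<le> ?y i'" using 1 i1' by (intro ord_mono) simp_all
          thus False using lt v by linarith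
        next
          case 2
          have "?y (i'+1) \<le> ?y i" using 2 i1 by (intro ord_mono) simp_all
          thus False using lt v by linarith
        qed
      qed
    qed
    from sum.reindex[OF this, of "\<lambda>j. Rsp n u j ^ 5"] show ?thesis by (simp add: comp_def)
  qed
  also have "\<dots> \<le> (\<Sum>j<n. Rsp n u j ^ 5)"
  proof (rule sum_mono2)
    show "J ` P \<subseteq> {..<n}" using J unfolding P_def by auto
    show "0 \<le> Rsp n u b ^ 5" if "b \<in> {..<n} - J ` P" for b
      using Rsp_nonneg[of b] that by simp
  qed simp
  finally show ?thesis .
qed

lemma spacing_total: assumes "1 \<le> n"
  shows "(\<Sum>i=1..n+1. (ordstat n u i - ordstat n u (i-1))^5)
     \<le> ordstat n u 1 ^ 5 + (\<Sum>j<n. Rsp n u j ^ 5)"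
proof -
  have e1: "(\<Sum>i=1..n+1. (ordstat n u i - ordstat n u (i-1))^5)
      = (ordstat n u 1 - ordstat n u 0)^5 + (\<Sum>i=Suc 1..Suc n. (ordstat n u i - ordstat n u (i-1))^5)"
    by (subst sum.atLeast_Suc_atMost) simp_all
  have e2: "(\<Sum>i=Suc 1..Suc n. (ordstat n u i - ordstat n u (i-1))^5)
      = (\<Sum>i=1..n. (ordstat n u (i+1) - ordstat n u i)^5)"
    by (subst sum.shift_bounds_cl_Suc_ivl) simp
  have e3: "ordstat n u 0 = 0" by (simp add: ordstat_def)
  show ?thesis unfolding e1 e2 e3 using spacing_R by simp
qed

end

definition cc :: "nat \<Rightarrow> real" where "cc k = (real k + 1)^5 - real k ^ 5"

lemma cc_nonneg: "0 \<le> cc k"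
  unfolding cc_def by (simp add: power_mono)

lemma cs_bound:
  fixes d :: "nat \<Rightarrow> real"
  assumes "\<And>i. i \<in> I \<Longrightarrow> 0 \<le> d i" "(\<Sum>i\<in>I. d i) = 1"
  shows "(\<Sum>i\<in>I. d i ^ 3)^2 \<le> (\<Sum>i\<in>I. d i ^ 5)"
proof -
  have "(\<Sum>i\<in>I. sqrt (d i) * (sqrt (d i) * d i ^ 2))^2
     \<le> (\<Sum>i\<in>I. (sqrt (d i))^2) * (\<Sum>i\<in>I. (sqrt (d i) * d i ^ 2)^2)"
    by (rule Cauchy_Schwarz_ineq_sum)
  moreover have "(\<Sum>i\<in>I. sqrt (d i) * (sqrt (d i) * d i ^ 2)) = (\<Sum>i\<in>I. d i ^ 3)"
  proof (rule sum.cong)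
    fix i assume "i \<in> I"
    hence "sqrt (d i) * sqrt (d i) = d i" using assms(1) by simp
    thus "sqrt (d i) * (sqrt (d i) * d i ^ 2) = d i ^ 3"
      by (simp add: power2_eq_square power3_eq_cube mult.assoc[symmetric])
  qed simp
  moreover have "(\<Sum>i\<in>I. (sqrt (d i))^2) = 1" using assms by simp
  moreover have "(\<Sum>i\<in>I. (sqrt (d i) * d i ^ 2)^2) = (\<Sum>i\<in>I. d i ^ 5)"
  proof (rule sum.cong)
    fix i assume "i \<in> I"
    hence "(sqrt (d i))^2 = d i" using assms(1) by simp
    thus "(sqrt (d i) * d i ^ 2)^2 = d i ^ 5"
      by (simp add: power_mult_distrib power2_eq_square eval_nat_numeral)
  qed simp
  ultimately show ?thesis by simp
qed

lemma disc_bound: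
  assumes "0 \<le> x" "x \<le> 1" "1 \<le> n"
  shows "x ^ 5 \<le> (1 / real n)^5 * (\<Sum>k<n. cc k * (if real k / real n < x then 1 else 0))"
proof -
  define m where "m = nat \<lceil>x * real n\<rceil>"
  have np: "0 < real n" using assms by simp
  have "0 \<le> x * real n" using assms by simp
  hence c0: "0 \<le> \<lceil>x * real n\<rceil>" by (simp add: zero_le_ceiling)
  have xm: "x * real n \<le> real m" unfolding m_def
    using le_of_int_ceiling[of "x * real n"] c0 by simp
  have mn: "m \<le> n" unfolding m_def using assms
    by (simp add: nat_le_iff ceiling_le_iff mult_left_le_one_le)
  have set_eq: "{k \<in> {..<n}. real k / real n < x} = {..<m}"
  proof (intro set_eqI iffI)
    fix k assume "k \<in> {k \<in> {..<n}. real k / real n < x}"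
    hence "real k < x * real n" using np by (simp add: divide_less_eq)
    hence "int k < \<lceil>x * real n\<rceil>" by (simp add: less_ceiling_iff)
    thus "k \<in> {..<m}" unfolding m_def by simp
  next
    fix k assume "k \<in> {..<m}"
    hence "int k < \<lceil>x * real n\<rceil>" unfolding m_def by simp
    hence "real k < x * real n" by (simp add: less_ceiling_iff)
    moreover have "k < n" using \<open>k \<in> {..<m}\<close> mn by simp
    ultimately show "k \<in> {k \<in> {..<n}. real k / real n < x}" using np by (simp add: divide_less_eq)
  qed
  have "(\<Sum>k<n. cc k * (if real k / real n < x then 1 else 0)) = (\<Sum>k<n. if real k / real n < x then cc k else 0)"
    by (rule sum.cong) simp_all
  also have "\<dots> = sum cc {k \<in> {..<n}. real k / real n < x}"
    by (rule sum.inter_filter[symmetric]) simp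
  also have "\<dots> = (\<Sum>k<m. real (Suc k) ^ 5 - real k ^ 5)" unfolding set_eq cc_def by (simp add: add.commute)
  also have "\<dots> = real m ^ 5" by (subst sum_lessThan_telescope) simp
  finally have S: "(\<Sum>k<n. cc k * (if real k / real n < x then 1 else 0)) = real m ^ 5" .
  have "x \<le> real m / real n" using xm np by (simp add: le_divide_eq)
  hence "x ^ 5 \<le> (real m / real n) ^ 5" using assms by (intro power_mono) simp_all
  also have "\<dots> = (1 / real n)^5 * real m ^ 5" by (simp add: power_divide)
  finally show ?thesis unfolding S .
qed

definition ff :: "nat \<Rightarrow> real" where "ff k = cc k * exp (- (real k - 1) / 2)"

lemma ff_nonneg: "0 \<le> ff k" unfolding ff_def using cc_nonneg by simp

lemma ff_summable: "summable ff"
proof (rule summable_comparison_test_bigo)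
  have "(\<lambda>k::nat. exp (- real k / 4)) = (\<lambda>k. exp (-1/4) ^ k)"
    by (auto simp: exp_of_nat_mult[symmetric] field_simps)
  thus "summable (\<lambda>k. norm (exp (- real k / 4)))" by simp
  show "ff \<in> O(\<lambda>k. exp (- real k / 4))"
    unfolding ff_def cc_def by real_asymp
qed

lemma K_bound: "\<exists>K. \<forall>n\<ge>1. (\<Sum>k\<in>{1..<n}. cc k * (1 - (real k - 1) / real n) ^ (n - 1)) \<le> K"
proof (intro exI allI impI)
  fix n :: nat assume n1: "1 \<le> n"
  have "(\<Sum>k\<in>{1..<n}. cc k * (1 - (real k - 1) / real n) ^ (n - 1)) \<le> (\<Sum>k\<in>{1..<n}. ff k)"
  proof (rule sum_mono)
    fix k assume k: "k \<in> {1..<n}"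
    hence n2: "2 \<le> n" by simp
    have np: "0 < real n" using n1 by simp
    define t where "t = (real k - 1) / real n"
    have a0: "0 \<le> 1 - t" using k np unfolding t_def by (simp add: field_simps)
    have a1: "1 - t \<le> exp (- t)"
      using exp_ge_add_one_self[of "- t"] by simp
    have "(1 - t) ^ (n - 1) \<le> exp (- t) ^ (n - 1)"
      using a0 a1 by (rule power_mono[rotated])
    also have "\<dots> = exp (real (n - 1) * (- t))"
      by (rule exp_of_nat_mult[symmetric])
    also have "\<dots> \<le> exp (- (real k - 1) / 2)"
    proof (subst exp_le_cancel_iff)
      have "real n \<le> 2 * real (n - 1)" using n2 by simp
      hence "(real k - 1) * real n \<le> (real k - 1) * (2 * real (n - 1))"
        using k by (intro mult_left_mono) auto
      thus "real (n - 1) * (- t) \<le> - (real k - 1) / 2"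
        using np unfolding t_def by (simp add: field_simps)
    qed
    finally have "(1 - (real k - 1) / real n) ^ (n - 1) \<le> exp (- (real k - 1) / 2)"
      unfolding t_def .
    thus "cc k * (1 - (real k - 1) / real n) ^ (n - 1) \<le> ff k"
      unfolding ff_def using cc_nonneg by (intro mult_left_mono) simp_all
  qed
  also have "\<dots> \<le> (\<Sum>k<n. ff k)"
    using ff_nonneg by (intro sum_mono2) auto
  also have "\<dots> \<le> suminf ff"
    using ff_summable ff_nonneg by (intro sum_le_suminf) auto
  finally show "(\<Sum>k\<in>{1..<n}. cc k * (1 - (real k - 1) / real n) ^ (n - 1)) \<le> suminf ff" .
qed

definition Fev :: "nat \<Rightarrow> nat \<Rightarrow> (nat \<Rightarrow> real) set" where
  "Fev n k = PiE {..<n} (\<lambda>_. {real k / real n <..})"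

definition Eev :: "nat \<Rightarrow> nat \<Rightarrow> nat \<Rightarrow> nat \<Rightarrow> (nat \<Rightarrow> real) set" where
  "Eev n j a k = PiE {..<n} (\<lambda>i. if i = j then {real a / real n ..< (real a + 1) / real n}
                                 else - {(real a + 1) / real n <.. (real a + real k) / real n})"

lemma space_unif: "space (unif_sample n) = PiE {..<n} (\<lambda>_. UNIV)"
  by (simp add: unif_sample_def space_PiM)

lemma Fev_sets: "Fev n k \<in> sets (unif_sample n)"
  unfolding Fev_def unif_sample_def by (rule sets_PiM_I_finite) auto

lemma Eev_sets: "Eev n j a k \<in> sets (unif_sample n)"
  unfolding Eev_def unif_sample_def by (rule sets_PiM_I_finite) auto

lemma Fev_meas: assumes "k \<le> n" "1 \<le> n"
  shows "measure (unif_sample n) (Fev n k) = (1 - real k / real n) ^ n"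
proof -
  have "{c <..} \<inter> {0..1} = {c <.. 1}" if "0 \<le> c" for c :: real using that by auto
  hence "{real k / real n <..} \<inter> {0..1} = {real k / real n <.. 1}" by simp
  moreover have "real k / real n \<le> 1" using assms by simp
  ultimately show ?thesis unfolding Fev_def by (subst meas_box) auto
qed

lemma mdiff: fixes c d :: real assumes "0 \<le> c" "d \<le> 1" "c \<le> d"
  shows "measure lborel ({0..1} - {c<..d}) = 1 - (d - c)"
proof -
  have "measure lborel ({0..1} - {c<..d}) = measure lborel {0..1::real} - measure lborel {c<..d}"
    using assms by (intro measure_Diff) auto
  thus ?thesis using assms by simp
qed

lemma Eev_meas: assumes "j < n" "1 \<le> k" "a + k < n"
  shows "measure (unif_sample n) (Eev n j a k) = (1 / real n) * (1 - (real k - 1) / real n) ^ (n - 1)"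
proof -
  have np: "0 < real n" using assms by simp
  define A where "A i = (if i = j then {real a / real n ..< (real a + 1) / real n}
                                 else - {(real a + 1) / real n <.. (real a + real k) / real n})" for i
  have m1: "measure lborel (A j \<inter> {0..1}) = 1 / real n"
  proof -
    have h1: "(real a + 1) / real n \<le> 1" using assms np by (simp add: divide_le_eq)
    have h2: "{c ..< d} \<inter> {0..1} = {c ..< d}" if "0 \<le> c" "d \<le> 1" for c d :: real using that by auto
    have eq: "A j \<inter> {0..1} = {real a / real n ..< (real a + 1) / real n}"
      unfolding A_def using h2[OF _ h1] by simp
    have le: "real a / real n \<le> (real a + 1) / real n" using np by (simp add: divide_right_mono)
    have "measure lborel (A j \<inter> {0..1}) = (real a + 1) / real n - real a / real n"
      by (simp only: eq measure_lborel_Ico[OF le])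
    also have "\<dots> = 1 / real n" by (simp add: diff_divide_distrib[symmetric])
    finally show ?thesis .
  qed
  have m2: "measure lborel (A i \<inter> {0..1}) = 1 - (real k - 1) / real n" if "i \<noteq> j" for i
  proof -
    have le1: "(real a + real k) / real n \<le> 1" using assms np by (simp add: divide_le_eq)
    have le0: "0 \<le> (real a + 1) / real n" using np by simp
    have le2: "(real a + 1) / real n \<le> (real a + real k) / real n" using assms np by (simp add: divide_right_mono)
    have "A i \<inter> {0..1} = {0..1} - {(real a + 1) / real n <.. (real a + real k) / real n}"
      unfolding A_def using that by auto
    also have "measure lborel \<dots> = 1 - ((real a + real k) / real n - (real a + 1) / real n)"
      using le0 le1 le2 by (rule mdiff)
    also have "\<dots> = 1 - (real k - 1) / real n" using np by (simp add: field_simps)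
    finally show ?thesis .
  qed
  have "measure (unif_sample n) (Eev n j a k) = (\<Prod>i<n. measure lborel (A i \<inter> {0..1}))"
    unfolding Eev_def A_def[symmetric] by (rule meas_box) (auto simp: A_def)
  also have "\<dots> = measure lborel (A j \<inter> {0..1}) * (\<Prod>i\<in>{..<n} - {j}. measure lborel (A i \<inter> {0..1}))"
    using assms by (subst prod.remove[of _ j]) auto
  also have "(\<Prod>i\<in>{..<n} - {j}. measure lborel (A i \<inter> {0..1})) = (\<Prod>i\<in>{..<n} - {j}. 1 - (real k - 1) / real n)"
    using m2 by (intro prod.cong) auto
  also have "\<dots> = (1 - (real k - 1) / real n) ^ (n - 1)"
    using assms by (simp add: card_Diff_singleton)
  finally show ?thesis using m1 by simp
qed

lemma F_ind:
  assumes sp: "u \<in> space (unif_sample n)" and U: "\<forall>i<n. u i \<in> {0..1}" and n1: "1 \<le> n"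
  shows "(if real k / real n < ordstat n u 1 then 1 else 0) \<le> (indicator (Fev n k) u :: real)"
proof (cases "real k / real n < ordstat n u 1")
  case True
  have "u \<in> Fev n k" unfolding Fev_def
  proof (rule PiE_I)
    fix i assume "i \<in> {..<n}"
    hence "ordstat n u 1 \<le> u i" using ord_first[OF U] by simp
    thus "u i \<in> {real k / real n <..}" using True by simp
  next
    fix i assume "i \<notin> {..<n}"
    thus "u i = undefined" using sp by (auto simp: space_unif PiE_def extensional_def)
  qed
  thus ?thesis by simp
qed simp

lemma E_event:
  assumes sp: "u \<in> space (unif_sample n)" and U: "\<forall>i<n. u i \<in> {0..1}"
    and j: "j < n" and k1: "1 \<le> k" and R: "real k / real n < Rsp n u j"
  shows "\<exists>a<n-k. u \<in> Eev n j a k"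
proof -
  have np: "0 < real n" using j by simp
  define v where "v = u j"
  have v01: "0 \<le> v" "v \<le> 1" using U j unfolding v_def by auto
  define a where "a = nat \<lfloor>v * real n\<rfloor>"
  have vn0: "0 \<le> v * real n" using v01 by simp
  hence f0: "0 \<le> \<lfloor>v * real n\<rfloor>" by simp
  have a1: "real a \<le> v * real n" unfolding a_def using f0 by simp
  have a2: "v * real n < real a + 1" unfolding a_def using f0 by linarith
  have av: "real a / real n \<le> v" using a1 np by (simp add: divide_le_eq)
  have va: "v < (real a + 1) / real n" using a2 np by (simp add: less_divide_eq)
  have "Rsp n u j \<le> 1 - v" using Rsp_le[OF U] unfolding v_def .
  hence "real k / real n < 1 - v" using R by simp
  hence "real k < real n - v * real n" using np by (simp add: field_simps)
  hence "real a + real k < real n" using a1 by simp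
  hence ak: "a < n - k" by linarith
  have "u \<in> Eev n j a k" unfolding Eev_def
  proof (rule PiE_I)
    fix i assume i: "i \<in> {..<n}"
    show "u i \<in> (if i = j then {real a / real n ..< (real a + 1) / real n}
                                 else - {(real a + 1) / real n <.. (real a + real k) / real n})"
    proof (cases "i = j")
      case True thus ?thesis using av va unfolding v_def by simp
    next
      case False
      have "\<not> ((real a + 1) / real n < u i \<and> u i \<le> (real a + real k) / real n)"
      proof
        assume c: "(real a + 1) / real n < u i \<and> u i \<le> (real a + real k) / real n"
        hence "u j < u i" using va unfolding v_def by simp
        hence "Rsp n u j \<le> u i - u j" using Rsp_gap[OF U] i by simp
        also have "\<dots> \<le> (real a + real k) / real n - real a / real n" using c av unfolding v_def by simp
        also have "\<dots> = real k / real n" by (simp add: diff_divide_distrib[symmetric])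
        finally show False using R by simp
      qed
      thus ?thesis using False by simp
    qed
  next
    fix i assume "i \<notin> {..<n}"
    thus "u i = undefined" using sp by (auto simp: space_unif PiE_def extensional_def)
  qed
  thus ?thesis using ak by blast
qed

lemma E_ind:
  assumes sp: "u \<in> space (unif_sample n)" and U: "\<forall>i<n. u i \<in> {0..1}"
    and j: "j < n" and k1: "1 \<le> k"
  shows "(if real k / real n < Rsp n u j then 1 else 0) \<le> (\<Sum>a<n-k. indicator (Eev n j a k) u :: real)"
proof (cases "real k / real n < Rsp n u j")
  case True
  then obtain a where a: "a < n - k" "u \<in> Eev n j a k" using E_event[OF sp U j k1] by blast
  have "(indicator (Eev n j a k) u :: real) \<le> (\<Sum>a<n-k. indicator (Eev n j a k) u)"
    using a(1) by (intro member_le_sum) auto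
  thus ?thesis using True a(2) by simp
qed (simp add: sum_nonneg)

definition gg :: "real \<Rightarrow> nat \<Rightarrow> (nat \<Rightarrow> real) \<Rightarrow> real" where
  "gg B n u = B^2 / 4 * (1 / real n)^5 * ((\<Sum>k<n. cc k * indicator (Fev n k) u)
      + (\<Sum>j<n. 1 + (\<Sum>k\<in>{1..<n}. cc k * (\<Sum>a<n-k. indicator (Eev n j a k) u))))"

lemma gg_nonneg: "0 \<le> gg B n u"
  unfolding gg_def using cc_nonneg by (intro mult_nonneg_nonneg add_nonneg_nonneg sum_nonneg) auto

lemma gg_int:
  assumes n1: "1 \<le> n"
  shows "integrable (unif_sample n) (gg B n)"
    and "integral\<^sup>L (unif_sample n) (gg B n) = B^2 / 4 * (1 / real n)^5 *
      ((\<Sum>k<n. cc k * measure (unif_sample n) (Fev n k))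
      + (\<Sum>j<n. 1 + (\<Sum>k\<in>{1..<n}. cc k * (\<Sum>a<n-k. measure (unif_sample n) (Eev n j a k)))))"
proof -
  interpret P: prob_space "unif_sample n" by (rule prob_unif)
  have iF[simp]: "integrable (unif_sample n) (indicator (Fev n k) :: _ \<Rightarrow> real)" for k
    using Fev_sets by (intro integrable_real_indicator) (auto simp: less_top[symmetric])
  have iE[simp]: "integrable (unif_sample n) (indicator (Eev n j a k) :: _ \<Rightarrow> real)" for j a k
    using Eev_sets by (intro integrable_real_indicator) (auto simp: less_top[symmetric])
  have mF[simp]: "measure (unif_sample n) (Fev n k \<inter> space (unif_sample n)) = measure (unif_sample n) (Fev n k)" for k
    using sets.sets_into_space[OF Fev_sets] by (simp add: Int_absorb2)
  have mE[simp]: "measure (unif_sample n) (Eev n j a k \<inter> space (unif_sample n)) = measure (unif_sample n) (Eev n j a k)" for j a k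
    using sets.sets_into_space[OF Eev_sets] by (simp add: Int_absorb2)
  let ?M = "unif_sample n"
  have iE2: "integrable ?M (\<lambda>u. \<Sum>a<n-k. indicator (Eev n j a k) u :: real)" for j k
    by (rule Bochner_Integration.integrable_sum, rule iE)
  have iE3: "integrable ?M (\<lambda>u. cc k * (\<Sum>a<n-k. indicator (Eev n j a k) u) :: real)" for j k
    by (intro integrable_mult_right iE2)
  have iE4: "integrable ?M (\<lambda>u. \<Sum>k\<in>{1..<n}. cc k * (\<Sum>a<n-k. indicator (Eev n j a k) u) :: real)" for j
    by (intro Bochner_Integration.integrable_sum iE3)
  have iE5: "integrable ?M (\<lambda>u. 1 + (\<Sum>k\<in>{1..<n}. cc k * (\<Sum>a<n-k. indicator (Eev n j a k) u)) :: real)" for j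
    by (intro Bochner_Integration.integrable_add iE4 P.integrable_const)
  have iE6: "integrable ?M (\<lambda>u. \<Sum>j<n. 1 + (\<Sum>k\<in>{1..<n}. cc k * (\<Sum>a<n-k. indicator (Eev n j a k) u)) :: real)"
    by (intro Bochner_Integration.integrable_sum iE5)
  have iF2: "integrable ?M (\<lambda>u. cc k * indicator (Fev n k) u :: real)" for k
    by (intro integrable_mult_right iF)
  have iF3: "integrable ?M (\<lambda>u. \<Sum>k<n. cc k * indicator (Fev n k) u :: real)"
    by (intro Bochner_Integration.integrable_sum iF2)
  have iS: "integrable ?M (\<lambda>u. (\<Sum>k<n. cc k * indicator (Fev n k) u) + (\<Sum>j<n. 1 + (\<Sum>k\<in>{1..<n}. cc k * (\<Sum>a<n-k. indicator (Eev n j a k) u))) :: real)"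
    by (intro Bochner_Integration.integrable_add iF3 iE6)
  show "integrable (unif_sample n) (gg B n)"
    unfolding gg_def by (intro integrable_mult_right iS)
  have h1: "integral\<^sup>L ?M (\<lambda>u. \<Sum>a<n-k. indicator (Eev n j a k) u :: real) = (\<Sum>a<n-k. measure ?M (Eev n j a k))" for j k
    by (subst Bochner_Integration.integral_sum) (simp_all only: iE Bochner_Integration.integral_indicator mE)
  have h2: "integral\<^sup>L ?M (\<lambda>u. cc k * (\<Sum>a<n-k. indicator (Eev n j a k) u) :: real) = cc k * (\<Sum>a<n-k. measure ?M (Eev n j a k))" for j k
    by (simp only: integral_mult_right_zero h1)
  have h3: "integral\<^sup>L ?M (\<lambda>u. \<Sum>k\<in>{1..<n}. cc k * (\<Sum>a<n-k. indicator (Eev n j a k) u) :: real) = (\<Sum>k\<in>{1..<n}. cc k * (\<Sum>a<n-k. measure ?M (Eev n j a k)))" for j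
    by (subst Bochner_Integration.integral_sum) (simp_all only: iE3 h2)
  have h4: "integral\<^sup>L ?M (\<lambda>u. 1 + (\<Sum>k\<in>{1..<n}. cc k * (\<Sum>a<n-k. indicator (Eev n j a k) u)) :: real) = 1 + (\<Sum>k\<in>{1..<n}. cc k * (\<Sum>a<n-k. measure ?M (Eev n j a k)))" for j
    by (subst Bochner_Integration.integral_add) (simp_all add: iE4 h3 P.prob_space)
  have h5: "integral\<^sup>L ?M (\<lambda>u. \<Sum>j<n. 1 + (\<Sum>k\<in>{1..<n}. cc k * (\<Sum>a<n-k. indicator (Eev n j a k) u)) :: real) = (\<Sum>j<n. 1 + (\<Sum>k\<in>{1..<n}. cc k * (\<Sum>a<n-k. measure ?M (Eev n j a k))))"
    by (subst Bochner_Integration.integral_sum) (simp_all only: iE5 h4)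
  have h6: "integral\<^sup>L ?M (\<lambda>u. \<Sum>k<n. cc k * indicator (Fev n k) u :: real) = (\<Sum>k<n. cc k * measure ?M (Fev n k))"
    by (subst Bochner_Integration.integral_sum) (simp_all only: iF2 integral_mult_right_zero Bochner_Integration.integral_indicator mF)
  have h7: "integral\<^sup>L ?M (\<lambda>u. (\<Sum>k<n. cc k * indicator (Fev n k) u) + (\<Sum>j<n. 1 + (\<Sum>k\<in>{1..<n}. cc k * (\<Sum>a<n-k. indicator (Eev n j a k) u))) :: real)
     = (\<Sum>k<n. cc k * measure ?M (Fev n k)) + (\<Sum>j<n. 1 + (\<Sum>k\<in>{1..<n}. cc k * (\<Sum>a<n-k. measure ?M (Eev n j a k))))"
    by (subst Bochner_Integration.integral_add) (simp_all only: iF3 iE6 h5 h6)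
  show "integral\<^sup>L (unif_sample n) (gg B n) = B^2 / 4 * (1 / real n)^5 *
      ((\<Sum>k<n. cc k * measure (unif_sample n) (Fev n k))
      + (\<Sum>j<n. 1 + (\<Sum>k\<in>{1..<n}. cc k * (\<Sum>a<n-k. measure (unif_sample n) (Eev n j a k)))))"
    unfolding gg_def by (simp only: integral_mult_right_zero h7)
qed

lemma sum_split0: fixes n :: nat assumes "1 \<le> n" shows "(\<Sum>k<n. f k) = f 0 + (\<Sum>k\<in>{1..<n}. f k)"
proof -
  have "{..<n} = insert 0 {1..<n}" using assms by (auto simp: not_le less_one Suc_le_eq)
  thus ?thesis by simp
qed

definition SS :: "nat \<Rightarrow> real" where
  "SS n = (\<Sum>k\<in>{1..<n}. cc k * (1 - (real k - 1) / real n) ^ (n - 1))"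

lemma SS_nonneg: "0 \<le> SS n"
  unfolding SS_def using cc_nonneg by (intro sum_nonneg mult_nonneg_nonneg) (auto simp: field_simps)

lemma pow_cmp: assumes "1 \<le> k" "k < n"
  shows "(1 - real k / real n) ^ n \<le> (1 - (real k - 1) / real n) ^ (n - 1)"
proof -
  have np: "0 < real n" using assms by simp
  have a0: "0 \<le> 1 - real k / real n" using assms np by (simp add: field_simps)
  have a1: "1 - real k / real n \<le> 1" using np by simp
  have a2: "1 - real k / real n \<le> 1 - (real k - 1) / real n" using np by (simp add: field_simps)
  have "(1 - real k / real n) ^ n \<le> (1 - real k / real n) ^ (n - 1)"
    using a0 a1 by (intro power_decreasing) auto
  also have "\<dots> \<le> (1 - (real k - 1) / real n) ^ (n - 1)"
    using a0 a2 by (intro power_mono)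
  finally show ?thesis .
qed

lemma gg_bound:
  assumes n1: "1 \<le> n"
  shows "integral\<^sup>L (unif_sample n) (gg B n) \<le> B^2 / 4 * (1 / real n)^5 * (2 * real n * (1 + SS n))"
proof -
  let ?M = "unif_sample n"
  have np: "0 < real n" using n1 by simp
  have b1: "(\<Sum>k<n. cc k * measure ?M (Fev n k)) \<le> 1 + SS n"
  proof -
    have "(\<Sum>k<n. cc k * measure ?M (Fev n k)) = cc 0 * measure ?M (Fev n 0) + (\<Sum>k\<in>{1..<n}. cc k * measure ?M (Fev n k))"
      using n1 by (rule sum_split0)
    also have "cc 0 * measure ?M (Fev n 0) = 1" using n1 by (simp add: Fev_meas cc_def)
    also have "(\<Sum>k\<in>{1..<n}. cc k * measure ?M (Fev n k)) \<le> SS n"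
      unfolding SS_def
    proof (rule sum_mono)
      fix k assume k: "k \<in> {1..<n}"
      hence "measure ?M (Fev n k) = (1 - real k / real n) ^ n" using n1 by (intro Fev_meas) auto
      also have "\<dots> \<le> (1 - (real k - 1) / real n) ^ (n - 1)" using k by (intro pow_cmp) auto
      finally show "cc k * measure ?M (Fev n k) \<le> cc k * (1 - (real k - 1) / real n) ^ (n - 1)"
        using cc_nonneg by (intro mult_left_mono) auto
    qed
    finally show ?thesis by simp
  qed
  have b2: "1 + (\<Sum>k\<in>{1..<n}. cc k * (\<Sum>a<n-k. measure ?M (Eev n j a k))) \<le> 1 + SS n" if j: "j < n" for j
  proof -
    have "(\<Sum>k\<in>{1..<n}. cc k * (\<Sum>a<n-k. measure ?M (Eev n j a k))) \<le> SS n"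
      unfolding SS_def
    proof (rule sum_mono)
      fix k assume k: "k \<in> {1..<n}"
      define q where "q = (1 - (real k - 1) / real n) ^ (n - 1)"
      have q0: "0 \<le> q" unfolding q_def using k np by (intro zero_le_power) (auto simp: field_simps)
      have "(\<Sum>a<n-k. measure ?M (Eev n j a k)) = (\<Sum>a<n-k. (1 / real n) * q)"
        unfolding q_def using j k by (intro sum.cong refl Eev_meas) auto
      also have "\<dots> = real (n - k) / real n * q" by simp
      also have "\<dots> \<le> q"
      proof -
        have "real (n - k) / real n \<le> 1" using np by (simp add: divide_le_eq)
        moreover have "0 \<le> real (n - k) / real n" by simp
        ultimately show ?thesis using q0 by (intro mult_left_le_one_le)
      qed
      finally show "cc k * (\<Sum>a<n-k. measure ?M (Eev n j a k)) \<le> cc k * (1 - (real k - 1) / real n) ^ (n - 1)"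
        unfolding q_def using cc_nonneg by (intro mult_left_mono) auto
    qed
    thus ?thesis by simp
  qed
  have b3: "(\<Sum>j<n. 1 + (\<Sum>k\<in>{1..<n}. cc k * (\<Sum>a<n-k. measure ?M (Eev n j a k)))) \<le> real n * (1 + SS n)"
  proof -
    have "(\<Sum>j<n. 1 + (\<Sum>k\<in>{1..<n}. cc k * (\<Sum>a<n-k. measure ?M (Eev n j a k)))) \<le> (\<Sum>j<n. 1 + SS n)"
      using b2 by (intro sum_mono) auto
    thus ?thesis by simp
  qed
  have tot: "(\<Sum>k<n. cc k * measure ?M (Fev n k)) + (\<Sum>j<n. 1 + (\<Sum>k\<in>{1..<n}. cc k * (\<Sum>a<n-k. measure ?M (Eev n j a k))))
      \<le> 2 * real n * (1 + SS n)"
  proof -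
    have "1 * (1 + SS n) \<le> real n * (1 + SS n)" using n1 SS_nonneg[of n] by (intro mult_right_mono) auto
    hence y1: "1 + SS n \<le> real n * (1 + SS n)" by simp
    have y2: "2 * real n * (1 + SS n) = real n * (1 + SS n) + real n * (1 + SS n)" by simp
    show ?thesis
      apply (rule order_trans[OF add_mono[OF b1 b3]])
      unfolding y2 using y1 by (rule add_right_mono)
  qed
  have c0: "0 \<le> B^2 / 4 * (1 / real n)^5" by simp
  show ?thesis unfolding gg_int(2)[OF n1] using mult_left_mono[OF tot c0] .
qed

lemma p1:
  assumes sp: "u \<in> space (unif_sample n)" and U: "\<forall>i<n. u i \<in> {0..1}" and n1: "1 \<le> n"
  shows "ordstat n u 1 ^ 5 \<le> (1 / real n)^5 * (\<Sum>k<n. cc k * indicator (Fev n k) u)"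
proof -
  have r: "0 \<le> ordstat n u 1" "ordstat n u 1 \<le> 1" using ord_range[OF U, of 1] by auto
  have "ordstat n u 1 ^ 5 \<le> (1 / real n)^5 * (\<Sum>k<n. cc k * (if real k / real n < ordstat n u 1 then 1 else 0))"
    using r n1 by (rule disc_bound)
  also have "\<dots> \<le> (1 / real n)^5 * (\<Sum>k<n. cc k * indicator (Fev n k) u)"
    using F_ind[OF sp U n1] cc_nonneg
    by (intro mult_left_mono sum_mono) (auto intro: mult_left_mono)
  finally show ?thesis .
qed

lemma p2:
  assumes sp: "u \<in> space (unif_sample n)" and U: "\<forall>i<n. u i \<in> {0..1}" and n1: "1 \<le> n" and j: "j < n"
  shows "Rsp n u j ^ 5 \<le> (1 / real n)^5 * (1 + (\<Sum>k\<in>{1..<n}. cc k * (\<Sum>a<n-k. indicator (Eev n j a k) u)))"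
proof -
  have r: "0 \<le> Rsp n u j" "Rsp n u j \<le> 1" using Rsp_nonneg[OF U j] Rsp_le[OF U, of j] U j by auto
  have "Rsp n u j ^ 5 \<le> (1 / real n)^5 * (\<Sum>k<n. cc k * (if real k / real n < Rsp n u j then 1 else 0))"
    using r n1 by (rule disc_bound)
  also have "(\<Sum>k<n. cc k * (if real k / real n < Rsp n u j then 1 else 0))
      = cc 0 * (if real 0 / real n < Rsp n u j then 1 else 0) + (\<Sum>k\<in>{1..<n}. cc k * (if real k / real n < Rsp n u j then 1 else 0))"
    using n1 by (rule sum_split0)
  also have "\<dots> \<le> 1 + (\<Sum>k\<in>{1..<n}. cc k * (\<Sum>a<n-k. indicator (Eev n j a k) u))"
  proof (rule add_mono)
    show "cc 0 * (if real 0 / real n < Rsp n u j then 1 else 0) \<le> (1::real)" by (simp add: cc_def)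
    show "(\<Sum>k\<in>{1..<n}. cc k * (if real k / real n < Rsp n u j then 1 else 0))
        \<le> (\<Sum>k\<in>{1..<n}. cc k * (\<Sum>a<n-k. indicator (Eev n j a k) u))"
    proof (rule sum_mono)
      fix k assume k: "k \<in> {1..<n}"
      show "cc k * (if real k / real n < Rsp n u j then 1 else 0) \<le> cc k * (\<Sum>a<n-k. indicator (Eev n j a k) u)"
        using E_ind[OF sp U j, of k] k cc_nonneg[of k] by (intro mult_left_mono) auto
    qed
  qed
  finally show ?thesis by (simp add: mult_left_mono)
qed

context trap
begin

lemma pw:
  assumes sp: "u \<in> space (unif_sample n)" and U: "\<forall>i<n. u i \<in> {0..1}" and n1: "1 \<le> n"
  shows "(integral {0..1} \<Lambda> - Z_QIS \<Lambda> n u)\<^sup>2 \<le> gg B n u"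
proof -
  let ?y = "ordstat n u"
  have y0: "?y 0 = 0" and y1: "?y (n+1) = 1" by (simp_all add: ordstat_def)
  have mono: "?y i \<le> ?y j" if "i \<le> j" "j \<le> n+1" for i j using ord_mono[OF U that] .
  have e: "\<bar>integral {0..1} \<Lambda> - Z_QIS \<Lambda> n u\<bar> \<le> B / 2 * (\<Sum>i=1..n+1. (?y i - ?y (i-1))^3)"
    unfolding Z_QIS_def by (rule global_err[OF y0 y1 mono])
  have dnn: "0 \<le> ?y i - ?y (i-1)" if "i \<in> {1..n+1}" for i using mono[of "i-1" i] that by simp
  have dsum: "(\<Sum>i=1..n+1. ?y i - ?y (i-1)) = 1"
  proof -
    have "(\<Sum>i=1..n+1. ?y i - ?y (i-1)) = (\<Sum>i=Suc 0..Suc n. ?y i - ?y (i-1))" by simp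
    also have "\<dots> = (\<Sum>i=0..n. ?y (Suc i) - ?y i)" by (subst sum.shift_bounds_cl_Suc_ivl) simp
    also have "\<dots> = ?y (Suc n) - ?y 0" by (rule sum_Suc_diff) simp
    finally show ?thesis using y0 y1 by simp
  qed
  have cs: "(\<Sum>i=1..n+1. (?y i - ?y (i-1))^3)^2 \<le> (\<Sum>i=1..n+1. (?y i - ?y (i-1))^5)"
    using dnn dsum by (rule cs_bound)
  have st: "(\<Sum>i=1..n+1. (?y i - ?y (i-1))^5) \<le> ?y 1 ^ 5 + (\<Sum>j<n. Rsp n u j ^ 5)"
    using spacing_total[OF U n1] .
  have q1: "?y 1 ^ 5 \<le> (1 / real n)^5 * (\<Sum>k<n. cc k * indicator (Fev n k) u)"
    using p1[OF sp U n1] .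
  have q2: "(\<Sum>j<n. Rsp n u j ^ 5) \<le> (1 / real n)^5 * (\<Sum>j<n. 1 + (\<Sum>k\<in>{1..<n}. cc k * (\<Sum>a<n-k. indicator (Eev n j a k) u)))"
  proof -
    have "(\<Sum>j<n. Rsp n u j ^ 5) \<le> (\<Sum>j<n. (1 / real n)^5 * (1 + (\<Sum>k\<in>{1..<n}. cc k * (\<Sum>a<n-k. indicator (Eev n j a k) u))))"
    proof (rule sum_mono)
      fix j assume "j \<in> {..<n}"
      hence "j < n" by simp
      from p2[OF sp U n1 this] show "Rsp n u j ^ 5 \<le> (1 / real n)^5 * (1 + (\<Sum>k\<in>{1..<n}. cc k * (\<Sum>a<n-k. indicator (Eev n j a k) u)))" .
    qed
    also have "\<dots> = (1 / real n)^5 * (\<Sum>j<n. 1 + (\<Sum>k\<in>{1..<n}. cc k * (\<Sum>a<n-k. indicator (Eev n j a k) u)))"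
      by (rule sum_distrib_left[symmetric])
    finally show ?thesis .
  qed
  have "(integral {0..1} \<Lambda> - Z_QIS \<Lambda> n u)\<^sup>2 = \<bar>integral {0..1} \<Lambda> - Z_QIS \<Lambda> n u\<bar>\<^sup>2" by simp
  also have "\<dots> \<le> (B / 2 * (\<Sum>i=1..n+1. (?y i - ?y (i-1))^3))\<^sup>2"
    using e by (intro power_mono) auto
  also have "\<dots> = B^2 / 4 * (\<Sum>i=1..n+1. (?y i - ?y (i-1))^3)^2" by (simp add: power_mult_distrib power_divide)
  also have "\<dots> \<le> B^2 / 4 * (?y 1 ^ 5 + (\<Sum>j<n. Rsp n u j ^ 5))"
    using order_trans[OF cs st] by (intro mult_left_mono) auto
  also have "\<dots> \<le> B^2 / 4 * ((1 / real n)^5 * (\<Sum>k<n. cc k * indicator (Fev n k) u)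
       + (1 / real n)^5 * (\<Sum>j<n. 1 + (\<Sum>k\<in>{1..<n}. cc k * (\<Sum>a<n-k. indicator (Eev n j a k) u))))"
    using add_mono[OF q1 q2] by (intro mult_left_mono) auto
  also have "\<dots> = gg B n u" unfolding gg_def by (simp add: distrib_left mult.assoc)
  finally show ?thesis .
qed

end

lemma avg: fixes d p q :: real assumes h: "d * q \<le> d * p"
  shows "d * q \<le> d * (p + q) / 2 \<and> d * (p + q) / 2 \<le> d * p"
proof -
  have e: "d * (p + q) / 2 = (d * p + d * q) / 2" by (simp add: distrib_left)
  show ?thesis unfolding e using h by (simp add: field_simps)
qed

lemma bounds:
  fixes \<Lambda> :: "real \<Rightarrow> real"
  assumes nonneg: "\<forall>s\<in>{0..1}. 0 \<le> \<Lambda> s"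
    and noninc: "\<forall>s t. 0 \<le> s \<longrightarrow> s \<le> t \<longrightarrow> t \<le> 1 \<longrightarrow> \<Lambda> t \<le> \<Lambda> s"
    and U: "\<forall>i<n. u i \<in> {0..1}" and n1: "1 \<le> n"
  shows "(\<Sum>i=1..n. (ordstat n u i - ordstat n u (i - 1)) * \<Lambda> (ordstat n u i)) \<le> Z_QIS \<Lambda> n u
       \<and> Z_QIS \<Lambda> n u \<le> (\<Sum>i=1..n. (ordstat n u (i + 1) - ordstat n u i) * \<Lambda> (ordstat n u i))
                   + ordstat n u 1 * \<Lambda> 0"
proof -
  let ?y = "ordstat n u"
  let ?D = "\<lambda>i. ?y i - ?y (i-1)"
  have mono: "?y i \<le> ?y j" if "i \<le> j" "j \<le> n+1" for i j using ord_mono[OF U that] .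
  have rng: "0 \<le> ?y i \<and> ?y i \<le> 1" if "i \<le> n+1" for i using ord_range[OF U that] .
  have t: "?D i * \<Lambda> (?y i) \<le> ?D i * (\<Lambda> (?y (i-1)) + \<Lambda> (?y i)) / 2
         \<and> ?D i * (\<Lambda> (?y (i-1)) + \<Lambda> (?y i)) / 2 \<le> ?D i * \<Lambda> (?y (i-1))" if i: "i \<in> {1..n+1}" for i
  proof -
    have d0: "0 \<le> ?D i" using mono[of "i-1" i] i by simp
    have a: "0 \<le> ?y (i-1)" "?y (i-1) \<le> ?y i" "?y i \<le> 1"
      using rng[of "i-1"] rng[of i] mono[of "i-1" i] i by auto
    have l: "\<Lambda> (?y i) \<le> \<Lambda> (?y (i-1))" using noninc a by blast
    have "?D i * \<Lambda> (?y i) \<le> ?D i * \<Lambda> (?y (i-1))" using mult_left_mono[OF l d0] .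
    thus ?thesis by (rule avg)
  qed
  have Z: "Z_QIS \<Lambda> n u = (\<Sum>i=1..n+1. ?D i * (\<Lambda> (?y (i-1)) + \<Lambda> (?y i)) / 2)"
    unfolding Z_QIS_def by (simp only: sum_divide_distrib[symmetric])
  have lower: "(\<Sum>i=1..n. ?D i * \<Lambda> (?y i)) \<le> Z_QIS \<Lambda> n u"
  proof -
    have "(\<Sum>i=1..n. ?D i * \<Lambda> (?y i)) \<le> (\<Sum>i=1..n. ?D i * \<Lambda> (?y i)) + ?D (n+1) * \<Lambda> (?y (n+1))"
    proof -
      have "0 \<le> ?D (n+1)" using mono[of n "n+1"] by simp
      moreover have "0 \<le> \<Lambda> (?y (n+1))" using nonneg rng[of "n+1"] by simp
      ultimately show ?thesis by simp
    qed
    also have "\<dots> = (\<Sum>i=1..n+1. ?D i * \<Lambda> (?y i))" by simp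
    also have "\<dots> \<le> Z_QIS \<Lambda> n u" unfolding Z using t by (intro sum_mono) blast
    finally show ?thesis .
  qed
  have upper: "Z_QIS \<Lambda> n u \<le> (\<Sum>i=1..n. (?y (i + 1) - ?y i) * \<Lambda> (?y i)) + ?y 1 * \<Lambda> 0"
  proof -
    have "Z_QIS \<Lambda> n u \<le> (\<Sum>i=1..n+1. ?D i * \<Lambda> (?y (i-1)))" unfolding Z using t by (intro sum_mono) blast
    also have "\<dots> = ?D 1 * \<Lambda> (?y 0) + (\<Sum>i=Suc 1..Suc n. ?D i * \<Lambda> (?y (i-1)))"
      by (subst sum.atLeast_Suc_atMost) simp_all
    also have "(\<Sum>i=Suc 1..Suc n. ?D i * \<Lambda> (?y (i-1))) = (\<Sum>i=1..n. (?y (i + 1) - ?y i) * \<Lambda> (?y i))"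
      by (subst sum.shift_bounds_cl_Suc_ivl) simp
    also have "?D 1 * \<Lambda> (?y 0) = ?y 1 * \<Lambda> 0" by (simp add: ordstat_def)
    finally show ?thesis by simp
  qed
  show ?thesis using lower upper by simp
qed

theorem lemma2:
  fixes \<Lambda> \<Lambda>' \<Lambda>'' :: "real \<Rightarrow> real" and B :: real
  assumes nonneg: "\<forall>s\<in>{0..1}. 0 \<le> \<Lambda> s"
    and noninc: "\<forall>s t. 0 \<le> s \<longrightarrow> s \<le> t \<longrightarrow> t \<le> 1 \<longrightarrow> \<Lambda> t \<le> \<Lambda> s"
    and d1: "\<forall>s\<in>{0..1}. (\<Lambda> has_real_derivative \<Lambda>' s) (at s within {0..1})"
    and d1_cont: "continuous_on {0..1} \<Lambda>'"
    and d2: "\<forall>s\<in>{0..1}. (\<Lambda>' has_real_derivative \<Lambda>'' s) (at s within {0..1})"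
    and d2_bdd: "\<forall>s\<in>{0..1}. \<bar>\<Lambda>'' s\<bar> \<le> B"
  shows "(\<exists>M. \<forall>n\<ge>1. (\<integral>u. (integral {0..1} \<Lambda> - Z_QIS \<Lambda> n u)\<^sup>2 \<partial>unif_sample n)
                      \<le> M / real n ^ 4)
       \<and> (\<forall>n\<ge>1. AE u in unif_sample n.
              (\<Sum>i=1..n. (ordstat n u i - ordstat n u (i - 1)) * \<Lambda> (ordstat n u i))
                \<le> Z_QIS \<Lambda> n u
            \<and> Z_QIS \<Lambda> n u
                \<le> (\<Sum>i=1..n. (ordstat n u (i + 1) - ordstat n u i) * \<Lambda> (ordstat n u i))
                   + ordstat n u 1 * \<Lambda> 0)"
proof -
  interpret trap \<Lambda> \<Lambda>' \<Lambda>'' B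
    by (unfold_locales) (fact d1 d2 d2_bdd)+
  have AE01: "AE u in unif_sample n. \<forall>i<n. u i \<in> {0..1}" for n
  proof -
    interpret P: prob_space "unif_sample n" by (rule prob_unif)
    have "measure (unif_sample n) (PiE {..<n} (\<lambda>_. {0..1::real})) = 1"
    proof -
      have "measure lborel ({0..1::real} \<inter> {0..1}) = 1" by simp
      thus ?thesis by (subst meas_box) simp_all
    qed
    hence "AE u in unif_sample n. u \<in> PiE {..<n} (\<lambda>_. {0..1::real})"
      by (rule P.AE_prob_1)
    thus ?thesis by eventually_elim (simp add: PiE_iff)
  qed
  obtain K where K: "\<And>n. 1 \<le> n \<Longrightarrow> SS n \<le> K"
    using K_bound unfolding SS_def by blast
  have K0: "0 \<le> K" using K[of 1] SS_nonneg[of 1] by simp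
  define M where "M = B^2 * (1 + K) / 2"
  have part1: "(\<integral>u. (integral {0..1} \<Lambda> - Z_QIS \<Lambda> n u)\<^sup>2 \<partial>unif_sample n) \<le> M / real n ^ 4"
    if n1: "1 \<le> n" for n
  proof (rule integral_real_bounded)
    have np: "0 < real n" using n1 by simp
    show r0: "0 \<le> M / real n ^ 4" unfolding M_def using K0 by simp
    have "AE u in unif_sample n. ennreal ((integral {0..1} \<Lambda> - Z_QIS \<Lambda> n u)\<^sup>2) \<le> ennreal (gg B n u)"
      using AE_space AE01[of n]
    proof eventually_elim
      case (elim u)
      show ?case by (rule ennreal_leI, rule pw[OF elim(1) elim(2) n1])
    qed
    hence "(\<integral>\<^sup>+u. ennreal ((integral {0..1} \<Lambda> - Z_QIS \<Lambda> n u)\<^sup>2) \<partial>unif_sample n)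
        \<le> (\<integral>\<^sup>+u. ennreal (gg B n u) \<partial>unif_sample n)"
      by (rule nn_integral_mono_AE)
    also have "\<dots> = ennreal (integral\<^sup>L (unif_sample n) (gg B n))"
      by (rule nn_integral_eq_integral[OF gg_int(1)[OF n1]]) (simp add: gg_nonneg)
    also have "\<dots> \<le> ennreal (M / real n ^ 4)"
    proof (rule ennreal_leI)
      have "integral\<^sup>L (unif_sample n) (gg B n) \<le> B^2 / 4 * (1 / real n)^5 * (2 * real n * (1 + SS n))"
        using gg_bound[OF n1] .
      also have "\<dots> \<le> B^2 / 4 * (1 / real n)^5 * (2 * real n * (1 + K))"
        using K[OF n1] np by (intro mult_left_mono) auto
      also have "\<dots> = M / real n ^ 4" unfolding M_def
      proof -
        have "real n ^ 5 = real n ^ 4 * real n" by (simp add: power_Suc2[symmetric] numeral_eq_Suc)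
        thus "B^2 / 4 * (1 / real n)^5 * (2 * real n * (1 + K)) = B^2 * (1 + K) / 2 / real n ^ 4"
          using np by (simp add: power_divide) (simp add: field_simps)
      qed
      finally show "integral\<^sup>L (unif_sample n) (gg B n) \<le> M / real n ^ 4" .
    qed
    finally show "integral\<^sup>N (unif_sample n) (\<lambda>u. (integral {0..1} \<Lambda> - Z_QIS \<Lambda> n u)\<^sup>2) \<le> ennreal (M / real n ^ 4)" .
  qed
  have part2: "AE u in unif_sample n.
              (\<Sum>i=1..n. (ordstat n u i - ordstat n u (i - 1)) * \<Lambda> (ordstat n u i))
                \<le> Z_QIS \<Lambda> n u
            \<and> Z_QIS \<Lambda> n u
                \<le> (\<Sum>i=1..n. (ordstat n u (i + 1) - ordstat n u i) * \<Lambda> (ordstat n u i))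
                   + ordstat n u 1 * \<Lambda> 0" if n1: "1 \<le> n" for n
    using AE01[of n]
  proof eventually_elim
    case (elim u)
    show ?case by (rule bounds[OF nonneg noninc elim n1])
  qed
  have part2: "AE u in unif_sample n.
              (\<Sum>i=1..n. (ordstat n u i - ordstat n u (i - 1)) * \<Lambda> (ordstat n u i))
                \<le> Z_QIS \<Lambda> n u
            \<and> Z_QIS \<Lambda> n u
                \<le> (\<Sum>i=1..n. (ordstat n u (i + 1) - ordstat n u i) * \<Lambda> (ordstat n u i))
                   + ordstat n u 1 * \<Lambda> 0" if n1: "1 \<le> n" for n
    using AE01[of n]
  proof eventually_elim
    case (elim u)
    show ?case by (rule bounds[OF nonneg noninc elim n1])
  qed
  show ?thesis using part1 part2 by blast
qed


end
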